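(* Let $p,q$ be distinct positive integers, $n\ge1$, and $s$ a nonempty finite sequence of elements of $\{p,q\}$. Every orbit (cycle) of the permutation $x\mapsto A^{p,q}_n(x,s)$ of $\{p,q\}^n$ has length a power of $2$.
   Context: Let $p,q$ be distinct positive integers. Define $\mathrm{Opp}(p)=q$, $\mathrm{Opp}(q)=p$. For $x\in\{p,q\}$ and a finite sequence $s=(s_1,\dots,s_m)$ of positive integers, $RLD^{p,q}(x,s)$ is the sequence over $\{p,q\}$ consisting of $s_1$ copies of $x$, then $s_2$ copies of $\mathrm{Opp}(x)$, then $s_3$ copies of $x$, and so on alternately. For $n\ge1$ and $x=(x_1,\dots,x_n)\in\{p,q\}^n$: $RLD^{p,q}_1(x_1,s)=RLD^{p,q}(x_1,s)$ and $RLD^{p,q}_n(x_{1:n},s)=RLD^{p,q}(x_n, RLD^{p,q}_{n-1}(x_{1:n-1},s))$. For a nonempty sequence $t$ over $\{p,q\}$, $\mathrm{OppEnd}(t)=\mathrm{Opp}(\text{last entry of } t)$. The automaton $A^{p,q}_n$ has state set $\{p,q\}^n$; for a state $x$ and a nonempty finite sequence $s$ over $\{p,q\}$, $A^{p,q}_n(x,s)$ is the state whose $i$-th coordinate is $\mathrm{OppEnd}(RLD^{p,q}_i(x_{1:i},s))$, $i=1,\dots,n$. The map $x\mapsto A^{p,q}_n(x,s)$ is a permutation of $\{p,q\}^n$. *)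

theory Defs
  imports Main
begin

definition opp :: "nat \<Rightarrow> nat \<Rightarrow> nat \<Rightarrow> nat" where
  "opp p q x = (if x = p then q else p)"

fun rld :: "nat \<Rightarrow> nat \<Rightarrow> nat \<Rightarrow> nat list \<Rightarrow> nat list" where
  "rld p q x [] = []"
| "rld p q x (k # ks) = replicate k x @ rld p q (opp p q x) ks"

text \<open>RLD_n^{p,q}(x_{1:n},s) = RLD(x_n, RLD_{n-1}(x_{1:n-1},s)), RLD_1(x_1,s) = RLD(x_1,s).\<close>
definition rldn :: "nat \<Rightarrow> nat \<Rightarrow> nat list \<Rightarrow> nat list \<Rightarrow> nat list" where
  "rldn p q xs s = foldl (\<lambda>t x. rld p q x t) s xs"

definition opp_end :: "nat \<Rightarrow> nat \<Rightarrow> nat list \<Rightarrow> nat" where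
  "opp_end p q t = opp p q (last t)"

definition automaton :: "nat \<Rightarrow> nat \<Rightarrow> nat \<Rightarrow> nat list \<Rightarrow> nat list \<Rightarrow> nat list" where
  "automaton p q n s x = map (\<lambda>i. opp_end p q (rldn p q (take i x) s)) [1..<n+1]"

definition states :: "nat \<Rightarrow> nat \<Rightarrow> nat \<Rightarrow> nat list set" where
  "states p q n = {x. length x = n \<and> set x \<subseteq> {p, q}}"

end

theory Submission
  imports Defs
begin

lemma opp_in: "opp p q a \<in> {p, q}"
  by (simp add: opp_def)

lemma opp_opp: "p \<noteq> q \<Longrightarrow> a \<in> {p, q} \<Longrightarrow> opp p q (opp p q a) = a"
  by (auto simp: opp_def)

lemma opp_neq: "p \<noteq> q \<Longrightarrow> a \<in> {p, q} \<Longrightarrow> opp p q a \<noteq> a"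
  by (auto simp: opp_def)

lemma rld_set: "set (rld p q a t) \<subseteq> {a, p, q}"
proof (induction t arbitrary: a)
  case Nil then show ?case by simp
next
  case (Cons k ks)
  have "set (rld p q (opp p q a) ks) \<subseteq> {p, q}"
    using Cons[of "opp p q a"] opp_in[of p q a] by auto
  then show ?case by auto
qed

lemma rld_last:
  assumes "p \<noteq> q" "a \<in> {p, q}" "\<forall>k\<in>set t. 0 < k" "t \<noteq> []"
  shows "rld p q a t \<noteq> [] \<and> last (rld p q a t) = (if odd (length t) then a else opp p q a)"
  using assms
proof (induction t arbitrary: a)
  case Nil then show ?case by simp
next
  case (Cons k ks)
  show ?case
  proof (cases "ks = []")
    case True
    then show ?thesis using Cons.prems by simp
  next
    case False
    have IH: "rld p q (opp p q a) ks \<noteq> [] \<and> last (rld p q (opp p q a) ks) =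
       (if odd (length ks) then opp p q a else opp p q (opp p q a))"
      using Cons.IH[of "opp p q a"] Cons.prems False opp_in by auto
    then show ?thesis using opp_opp[OF Cons.prems(1,2)] by auto
  qed
qed

lemma rldn_snoc: "rldn p q (u @ [a]) s = rld p q a (rldn p q u s)"
  by (simp add: rldn_def)

lemma rldn_props:
  assumes "0 < p" "0 < q" "p \<noteq> q" "s \<noteq> []" "set s \<subseteq> {p, q}" "set u \<subseteq> {p, q}"
  shows "rldn p q u s \<noteq> [] \<and> set (rldn p q u s) \<subseteq> {p, q}"
  using assms(6)
proof (induction u rule: rev_induct)
  case Nil then show ?case using assms by (simp add: rldn_def)
next
  case (snoc a u)
  then have h: "rldn p q u s \<noteq> []" "set (rldn p q u s) \<subseteq> {p, q}" "a \<in> {p,q}" by auto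
  have pos: "\<forall>k\<in>set (rldn p q u s). 0 < k" using h(2) assms(1,2) by auto
  show ?case unfolding rldn_snoc using rld_last[OF assms(3) h(3) pos h(1)] rld_set[of p q a "rldn p q u s"] h(3)
    by auto
qed

lemma g_formula:
  assumes "0 < p" "0 < q" "p \<noteq> q" "s \<noteq> []" "set s \<subseteq> {p, q}" "set u \<subseteq> {p, q}" "a \<in> {p, q}"
  shows "opp_end p q (rldn p q (u @ [a]) s) = (if odd (length (rldn p q u s)) then opp p q a else a)"
proof -
  have h: "rldn p q u s \<noteq> []" "set (rldn p q u s) \<subseteq> {p, q}" using rldn_props[OF assms(1-6)] by auto
  have pos: "\<forall>k\<in>set (rldn p q u s). 0 < k" using h(2) assms(1,2) by auto
  show ?thesis unfolding opp_end_def rldn_snoc using rld_last[OF assms(3) assms(7) pos h(1)] opp_opp[OF assms(3,7)]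
    by auto
qed

lemma aut_len: "length (automaton p q n s x) = n"
  by (simp add: automaton_def)

lemma aut_take: "j \<le> n \<Longrightarrow> take j (automaton p q n s x) = automaton p q j s (take j x)"
proof -
  assume j: "j \<le> n"
  have "take j [1..<n+1] = [1..<1+j]" using j by (intro take_upt) simp
  then have "take j [1..<n+1] = [1..<j+1]" by (simp only: add.commute)
  then have "take j (automaton p q n s x) = map (\<lambda>i. opp_end p q (rldn p q (take i x) s)) [1..<j+1]"
    by (simp add: automaton_def take_map)
  also have "\<dots> = automaton p q j s (take j x)"
    unfolding automaton_def by (rule map_cong) (auto simp: min_def)
  finally show ?thesis .
qed

lemma aut_Suc: "automaton p q (Suc n) s x = automaton p q n s x @ [opp_end p q (rldn p q (take (Suc n) x) s)]"
  by (simp add: automaton_def)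

lemma aut_states: "automaton p q n s x \<in> states p q n"
  by (auto simp: states_def automaton_def opp_end_def opp_def)

lemma aut_pow_states: "x \<in> states p q n \<Longrightarrow> (automaton p q n s ^^ k) x \<in> states p q n"
  by (induction k) (auto simp: aut_states)

lemma aut_pow_take:
  assumes "length x = Suc n"
  shows "take n ((automaton p q (Suc n) s ^^ k) x) = (automaton p q n s ^^ k) (take n x)"
proof (induction k)
  case 0 then show ?case by simp
next
  case (Suc k)
  have "take n ((automaton p q (Suc n) s ^^ Suc k) x)
      = automaton p q n s (take n ((automaton p q (Suc n) s ^^ k) x))"
    by (simp add: aut_take)
  then show ?case using Suc by simp
qed

definition sw :: "nat \<Rightarrow> nat \<Rightarrow> nat list \<Rightarrow> nat list" where
  "sw p q x = butlast x @ [opp p q (last x)]"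

lemma states_Suc: "x \<in> states p q (Suc n) \<Longrightarrow> \<exists>u a. x = u @ [a] \<and> u \<in> states p q n \<and> a \<in> {p, q}"
proof -
  assume x: "x \<in> states p q (Suc n)"
  then have "x \<noteq> []" by (auto simp: states_def)
  then obtain u a where "x = u @ [a]" by (metis rev_exhaust)
  then show ?thesis using x by (auto simp: states_def)
qed

lemma aut_snoc:
  assumes "length u = n"
  shows "automaton p q (Suc n) s (u @ [a]) = automaton p q n s u @ [opp_end p q (rldn p q (u @ [a]) s)]"
proof -
  have "automaton p q n s (u @ [a]) = take n (automaton p q n s (u @ [a]))" by (simp add: aut_len)
  also have "\<dots> = automaton p q n s u" using assms by (simp add: aut_take)
  finally show ?thesis using assms by (simp add: aut_Suc)
qed

lemma sw_comm:
  assumes "0 < p" "0 < q" "p \<noteq> q" "s \<noteq> []" "set s \<subseteq> {p, q}" "x \<in> states p q (Suc n)"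
  shows "automaton p q (Suc n) s (sw p q x) = sw p q (automaton p q (Suc n) s x)"
proof -
  obtain u a where ua: "x = u @ [a]" "u \<in> states p q n" "a \<in> {p, q}" using states_Suc[OF assms(6)] by blast
  have lu: "length u = n" "set u \<subseteq> {p,q}" using ua(2) by (auto simp: states_def)
  have oa: "opp p q a \<in> {p,q}" by (rule opp_in)
  show ?thesis
    unfolding ua sw_def using aut_snoc[OF lu(1)]
      g_formula[OF assms(1-5) lu(2) ua(3)] g_formula[OF assms(1-5) lu(2) oa] opp_opp[OF assms(3) ua(3)]
    by simp
qed

lemma sw_states: "x \<in> states p q (Suc n) \<Longrightarrow> sw p q x \<in> states p q (Suc n)"
proof -
  assume x: "x \<in> states p q (Suc n)"
  obtain u a where ua: "x = u @ [a]" "u \<in> states p q n" "a \<in> {p, q}" using states_Suc[OF x] by blast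
  have "sw p q x = u @ [opp p q a]" unfolding ua sw_def by simp
  then show ?thesis using ua(2) opp_in[of p q a] unfolding states_def by auto
qed

lemma sw_sw: "p \<noteq> q \<Longrightarrow> x \<in> states p q (Suc n) \<Longrightarrow> sw p q (sw p q x) = x"
proof -
  assume pq: "p \<noteq> q" and x: "x \<in> states p q (Suc n)"
  obtain u a where ua: "x = u @ [a]" "u \<in> states p q n" "a \<in> {p, q}" using states_Suc[OF x] by blast
  show ?thesis unfolding ua sw_def using opp_opp[OF pq ua(3)] by simp
qed

lemma sw_neq: "p \<noteq> q \<Longrightarrow> x \<in> states p q (Suc n) \<Longrightarrow> sw p q x \<noteq> x"
proof -
  assume pq: "p \<noteq> q" and x: "x \<in> states p q (Suc n)"
  obtain u a where ua: "x = u @ [a]" "u \<in> states p q n" "a \<in> {p, q}" using states_Suc[OF x] by blast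
  show ?thesis unfolding ua sw_def using opp_neq[OF pq ua(3)] by simp
qed

lemma sw_pow_comm:
  assumes "0 < p" "0 < q" "p \<noteq> q" "s \<noteq> []" "set s \<subseteq> {p, q}" "x \<in> states p q (Suc n)"
  shows "(automaton p q (Suc n) s ^^ k) (sw p q x) = sw p q ((automaton p q (Suc n) s ^^ k) x)"
proof (induction k)
  case 0 then show ?case by simp
next
  case (Suc k)
  then show ?case using sw_comm[OF assms(1-5) aut_pow_states[OF assms(6), where s=s and k=k]] by simp
qed

lemma same_prefix:
  assumes "p \<noteq> q" "x \<in> states p q (Suc n)" "y \<in> states p q (Suc n)" "take n y = take n x"
  shows "y = x \<or> y = sw p q x"
proof -
  obtain u a where ua: "x = u @ [a]" "u \<in> states p q n" "a \<in> {p, q}" using states_Suc[OF assms(2)] by blast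
  obtain v b where vb: "y = v @ [b]" "v \<in> states p q n" "b \<in> {p, q}" using states_Suc[OF assms(3)] by blast
  have "v = u" using assms(4) ua vb by (auto simp: states_def)
  then show ?thesis using ua vb assms(1) by (auto simp: sw_def opp_def)
qed

lemma main:
  assumes "0 < p" "0 < q" "p \<noteq> q" "s \<noteq> []" "set s \<subseteq> {p, q}"
  shows "\<forall>x \<in> states p q n. \<exists>m::nat. (automaton p q n s ^^ (2 ^ m)) x = x \<and>
           (\<forall>k. (automaton p q n s ^^ k) x = x \<longrightarrow> 2 ^ m dvd k)"
proof (induction n)
  case 0
  show ?case
  proof
    fix x assume "x \<in> states p q 0"
    then have "x = []" by (simp add: states_def)
    moreover have "automaton p q 0 s [] = []" by (simp add: automaton_def)
    ultimately show "\<exists>m::nat. (automaton p q 0 s ^^ (2 ^ m)) x = x \<and>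
           (\<forall>k. (automaton p q 0 s ^^ k) x = x \<longrightarrow> 2 ^ m dvd k)"
      by (intro exI[of _ 0]) simp
  qed
next
  case (Suc n)
  show ?case
  proof
    fix x assume x: "x \<in> states p q (Suc n)"
    define F where "F = automaton p q (Suc n) s"
    define G where "G = automaton p q n s"
    have lx: "length x = Suc n" using x by (simp add: states_def)
    have u: "take n x \<in> states p q n" using x by (auto simp: states_def dest: in_set_takeD)
    obtain m where m: "(G ^^ (2 ^ m)) (take n x) = take n x"
      "\<forall>k. (G ^^ k) (take n x) = take n x \<longrightarrow> 2 ^ m dvd k"
      using Suc.IH u unfolding G_def by blast
    define L :: nat where "L = 2 ^ m"
    have tk: "take n ((F ^^ k) x) = (G ^^ k) (take n x)" for k
      unfolding F_def G_def by (rule aut_pow_take[OF lx])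
    have dv: "(F ^^ k) x = x \<Longrightarrow> L dvd k" for k
      using m(2) tk[of k] unfolding L_def by simp
    have yst: "(F ^^ L) x \<in> states p q (Suc n)" unfolding F_def by (rule aut_pow_states[OF x])
    have "take n ((F ^^ L) x) = take n x" using tk[of L] m(1) unfolding L_def by simp
    then have cases: "(F ^^ L) x = x \<or> (F ^^ L) x = sw p q x"
      using same_prefix[OF assms(3) x yst] by simp
    have comm: "(F ^^ k) (sw p q x) = sw p q ((F ^^ k) x)" for k
      unfolding F_def by (rule sw_pow_comm[OF assms x])
    show "\<exists>m::nat. (F ^^ (2 ^ m)) x = x \<and> (\<forall>k. (F ^^ k) x = x \<longrightarrow> 2 ^ m dvd k)"
      unfolding F_def[symmetric]
    proof (cases "(F ^^ L) x = x")
      case True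
      then show ?thesis using dv unfolding L_def by blast
    next
      case False
      then have sx: "(F ^^ L) x = sw p q x" using cases by simp
      have pw: "(F ^^ (L * j)) x = (if even j then x else sw p q x)" for j
      proof (induction j)
        case 0 then show ?case by simp
      next
        case (Suc j)
        have "(F ^^ (L * Suc j)) x = (F ^^ L) ((F ^^ (L * j)) x)"
          by (simp add: funpow_add mult.commute)
        also have "\<dots> = (if even j then sw p q x else x)"
          using Suc comm[of L] sx sw_sw[OF assms(3) x] by simp
        finally show ?case by simp
      qed
      show ?thesis
      proof (intro exI[of _ "Suc m"] conjI allI impI)
        show "(F ^^ (2 ^ Suc m)) x = x" using pw[of 2] unfolding L_def by (simp add: mult.commute)
      next
        fix k assume k: "(F ^^ k) x = x"
        obtain j where j: "k = L * j" using dv[OF k] by blast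
        have "even j" using pw[of j] k j sw_neq[OF assms(3) x] by (auto split: if_splits)
        then show "2 ^ Suc m dvd k" using j unfolding L_def by auto
      qed
    qed
  qed
qed

theorem lemma5:
  fixes p q n :: nat and s :: "nat list"
  assumes "0 < p" and "0 < q" and "p \<noteq> q" and "1 \<le> n"
    and "s \<noteq> []" and "set s \<subseteq> {p, q}"
  shows "\<forall>x \<in> states p q n. \<exists>m::nat.
           (automaton p q n s ^^ (2 ^ m)) x = x \<and>
           (\<forall>k. 0 < k \<and> k < 2 ^ m \<longrightarrow> (automaton p q n s ^^ k) x \<noteq> x)"
proof
  fix x assume x: "x \<in> states p q n"
  obtain m where m: "(automaton p q n s ^^ (2 ^ m)) x = x"
    "\<forall>k. (automaton p q n s ^^ k) x = x \<longrightarrow> 2 ^ m dvd k"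
    using main[OF assms(1,2,3,5,6)] x by blast
  show "\<exists>m::nat. (automaton p q n s ^^ (2 ^ m)) x = x \<and>
           (\<forall>k. 0 < k \<and> k < 2 ^ m \<longrightarrow> (automaton p q n s ^^ k) x \<noteq> x)"
    using m by (metis dvd_imp_le not_le)
qed

end
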